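(* Let $M$ be the monoid (algebra in sets) generated by $a,b,d,e,f,h,i,j,k,l,n,o,p$ subject to the relations $ba=ed$, $ea=fb$, $hb=id$, $jb=kd$, $oi=pk$, $ej=ph$, $le=ek=pi$, $nf=oh=pj$. Then $M$ is basic-set, i.e. for all $u,v,x\in M$, $ux=vx$ implies $u=v$.
   Context: For an associative algebra viewed as an operad concentrated in arity $1$, the basic-set condition (injectivity of $\nu\mapsto\gamma(\nu;\nu_1)$) is right cancellativity of the underlying monoid. *)

theory Defs
  imports Main
begin

datatype gen = Ga | Gb | Gd | Ge | Gf | Gh | Gi | Gj | Gk | Gl | Gn | Go | Gp

text \<open>Defining relations; a word x1 x2 ... is the list [x1, x2, ...] (product x1 * x2 * ...).\<close>
definition rels :: "(gen list \<times> gen list) set" where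
  "rels = {([Gb,Ga],[Ge,Gd]), ([Ge,Ga],[Gf,Gb]), ([Gh,Gb],[Gi,Gd]), ([Gj,Gb],[Gk,Gd]),
           ([Go,Gi],[Gp,Gk]), ([Ge,Gj],[Gp,Gh]),
           ([Gl,Ge],[Ge,Gk]), ([Ge,Gk],[Gp,Gi]),
           ([Gn,Gf],[Go,Gh]), ([Go,Gh],[Gp,Gj])}"

inductive wcong :: "gen list \<Rightarrow> gen list \<Rightarrow> bool" where
  step: "(l, r) \<in> rels \<Longrightarrow> wcong (u @ l @ v) (u @ r @ v)"
| refl: "wcong w w"
| sym: "wcong w w' \<Longrightarrow> wcong w' w"
| trans: "wcong w w' \<Longrightarrow> wcong w' w'' \<Longrightarrow> wcong w w''"

lemma wcong_equivp: "equivp wcong"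
  by (rule equivpI) (auto simp: reflp_def symp_def transp_def intro: wcong.intros)

lemma wcong_app: "wcong u u' \<Longrightarrow> wcong v v' \<Longrightarrow> wcong (u @ v) (u' @ v')"
proof -
  have L: "wcong u u' \<Longrightarrow> wcong (u @ v) (u' @ v)" for u u' v
  proof (induction rule: wcong.induct)
    case (step l r a b) then show ?case using wcong.step[of l r a "b @ v"] by simp
  qed (auto intro: wcong.intros)
  have R: "wcong v v' \<Longrightarrow> wcong (u @ v) (u @ v')" for u v v'
  proof (induction rule: wcong.induct)
    case (step l r a b) then show ?case using wcong.step[of l r "u @ a" b] by simp
  qed (auto intro: wcong.intros)
  assume "wcong u u'" "wcong v v'"
  then show ?thesis using L R wcong.trans by blast
qed

quotient_type M = "gen list" / wcong
  by (rule wcong_equivp)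

instantiation M :: monoid_mult
begin
lift_definition one_M :: M is "[]" .
lift_definition times_M :: "M \<Rightarrow> M \<Rightarrow> M" is "(@)" by (rule wcong_app)
instance by standard (transfer, simp add: wcong.refl)+
end

lift_definition gen :: "gen \<Rightarrow> M" is "\<lambda>x. [x]" .

end

theory Submission
  imports Defs
begin

definition relsL :: "(gen list \<times> gen list) list" where
  "relsL = [([Gb,Ga],[Ge,Gd]), ([Ge,Ga],[Gf,Gb]), ([Gh,Gb],[Gi,Gd]), ([Gj,Gb],[Gk,Gd]),
           ([Go,Gi],[Gp,Gk]), ([Ge,Gj],[Gp,Gh]),
           ([Gl,Ge],[Ge,Gk]), ([Ge,Gk],[Gp,Gi]),
           ([Gn,Gf],[Go,Gh]), ([Go,Gh],[Gp,Gj])]"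

lemma relsL_set: "set relsL = rels"
  unfolding relsL_def rels_def by auto

fun nbrs :: "gen list \<Rightarrow> gen list list" where
  "nbrs (a#b#w) = map (\<lambda>r. r @ w) ([r. (l,r) \<leftarrow> relsL, l = [a,b]] @ [l. (l,r) \<leftarrow> relsL, r = [a,b]])
      @ map ((#) a) (nbrs (b#w))"
| "nbrs _ = []"

lemma wcong_cons: "wcong w w' \<Longrightarrow> wcong (a#w) (a#w')"
  using wcong_app[OF wcong.refl[of "[a]"]] by simp

lemma nbrs_sound: "W' \<in> set (nbrs W) \<Longrightarrow> wcong W W'"
proof (induction W arbitrary: W' rule: nbrs.induct)
  case (1 a b w)
  have s1: "wcong (a # b # w) (r @ w)" if "([a,b], r) \<in> set relsL" for r
    using wcong.step[of "[a,b]" r "[]" w] that by (simp add: relsL_set)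
  have s2: "wcong (a # b # w) (l @ w)" if "(l, [a,b]) \<in> set relsL" for l
    using wcong.sym[OF wcong.step[of l "[a,b]" "[]" w]] that by (simp add: relsL_set)
  have s3: "wcong (a # b # w) (a # W'')" if "W'' \<in> set (nbrs (b # w))" for W''
    using 1(1)[OF that] by (rule wcong_cons)
  from 1(2) show ?case
    unfolding nbrs.simps set_append set_map set_concat by (auto intro: s1 s2 s3)
qed auto

fun reach :: "nat \<Rightarrow> gen list \<Rightarrow> gen list list" where
  "reach 0 A = [A]"
| "reach (Suc k) A = remdups (reach k A @ concat (map nbrs (reach k A)))"

lemma reach_sound: "B \<in> set (reach k A) \<Longrightarrow> wcong A B"
proof (induction k arbitrary: B)
  case 0 then show ?case by (auto intro: wcong.refl)
next
  case (Suc k)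
  then show ?case by (auto intro: wcong.trans nbrs_sound)
qed

definition LxL :: "(gen list \<times> gen \<times> gen list \<times> gen) list" where
  "LxL = [([Gb],Ga,[Ge],Gd), ([Ge],Gd,[Gb],Ga), ([Ge],Ga,[Gf],Gb), ([Gf],Gb,[Ge],Ga),
          ([Gh],Gb,[Gi],Gd), ([Gi],Gd,[Gh],Gb), ([Gj],Gb,[Gk],Gd), ([Gk],Gd,[Gj],Gb),
          ([Go],Gi,[Gp],Gk), ([Gp],Gk,[Go],Gi), ([Ge],Gj,[Gp],Gh), ([Gp],Gh,[Ge],Gj),
          ([Gl],Ge,[Ge],Gk), ([Ge],Gk,[Gl],Ge), ([Ge],Gk,[Gp],Gi), ([Gp],Gi,[Ge],Gk),
          ([Gn],Gf,[Go],Gh), ([Go],Gh,[Gn],Gf), ([Go],Gh,[Gp],Gj), ([Gp],Gj,[Go],Gh),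
          ([Gl],Ge,[Gp],Gi), ([Gp],Gi,[Gl],Ge), ([Gn],Gf,[Gp],Gj), ([Gp],Gj,[Gn],Gf),
          ([Ge,Gj],Gb,[Gl,Gb],Ga), ([Gl,Gb],Ga,[Ge,Gj],Gb),
          ([Go,Gi],Gd,[Gn,Ge],Ga), ([Gn,Ge],Ga,[Go,Gi],Gd)]"

definition baseL :: "(gen \<times> gen \<times> gen \<times> gen) list" where
  "baseL = [(Gb,Ga,Ge,Gd), (Ge,Gd,Gb,Ga), (Ge,Ga,Gf,Gb), (Gf,Gb,Ge,Ga), (Gh,Gb,Gi,Gd), (Gi,Gd,Gh,Gb), (Gj,Gb,Gk,Gd), (Gk,Gd,Gj,Gb), (Go,Gi,Gp,Gk), (Gp,Gk,Go,Gi), (Ge,Gj,Gp,Gh), (Gp,Gh,Ge,Gj), (Gl,Ge,Ge,Gk), (Ge,Gk,Gl,Ge), (Ge,Gk,Gp,Gi), (Gp,Gi,Ge,Gk), (Gn,Gf,Go,Gh), (Go,Gh,Gn,Gf), (Go,Gh,Gp,Gj), (Gp,Gj,Go,Gh)]"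

lemma base_of_rels1:
  "(l,r) \<in> rels \<Longrightarrow> length l = 2 \<and> length r = 2 \<and> (l!0,l!1,r!0,r!1) \<in> set baseL \<and> (r!0,r!1,l!0,l!1) \<in> set baseL"
  unfolding rels_def by (simp add: baseL_def) (elim disjE; simp)

lemma base_of_rels:
  assumes "(l,r) \<in> rels \<or> (r,l) \<in> rels"
  shows "\<exists>p x q y. l = [p,x] \<and> r = [q,y] \<and> (p,x,q,y) \<in> set baseL"
proof -
  have L: "length l = 2" "length r = 2" and B: "(l!0,l!1,r!0,r!1) \<in> set baseL"
    using assms base_of_rels1 by blast+
  have "l = [l!0, l!1]" using L(1) by (cases l; cases "tl l"; simp)
  moreover have "r = [r!0, r!1]" using L(2) by (cases r; cases "tl r"; simp)
  ultimately show ?thesis using B by blast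
qed

definition Cp :: "gen list \<Rightarrow> gen \<Rightarrow> gen list \<Rightarrow> gen \<Rightarrow> bool" where
  "Cp w x w' y \<longleftrightarrow> (x = y \<and> wcong w w') \<or>
     (\<exists>U V z. (U,x,V,y) \<in> set LxL \<and> wcong w (z @ U) \<and> wcong w' (z @ V))"

definition cmatch :: "gen list \<Rightarrow> gen list \<Rightarrow> gen list list \<Rightarrow> gen list list \<Rightarrow> bool" where
  "cmatch U V CA CB \<longleftrightarrow> (\<exists>C\<in>set CA. \<exists>D\<in>set CB. length U \<le> length C \<and> length V \<le> length D \<and>
           drop (length C - length U) C = U \<and> drop (length D - length V) D = V \<and>
           take (length C - length U) C = take (length D - length V) D)"

definition cpc :: "gen list \<Rightarrow> gen \<Rightarrow> gen list \<Rightarrow> gen \<Rightarrow> bool" where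
  "cpc A x B y \<longleftrightarrow> (if x = y then B \<in> set (reach 5 A) else False) \<or>
     (\<exists>(U,x',V,y')\<in>set LxL. if x' = x then (if y' = y then cmatch U V (reach 5 A) (reach 5 B) else False) else False)"

lemma cpc_sound: "cpc A x B y \<Longrightarrow> Cp A x B y"
proof -
  assume "cpc A x B y"
  then consider "x = y" "B \<in> set (reach 5 A)"
    | U V C D where "(U,x,V,y) \<in> set LxL" "C \<in> set (reach 5 A)" "D \<in> set (reach 5 B)"
      "drop (length C - length U) C = U" "drop (length D - length V) D = V"
      "take (length C - length U) C = take (length D - length V) D"
    unfolding cpc_def cmatch_def by (fastforce split: if_splits)
  then show ?thesis
  proof cases
    case 1 then show ?thesis by (auto simp: Cp_def dest: reach_sound)
  next
    case 2
    let ?t = "take (length C - length U) C"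
    have "C = ?t @ U" using 2(4) by (metis append_take_drop_id)
    moreover have "D = ?t @ V" using 2(5,6) by (metis append_take_drop_id)
    ultimately show ?thesis using 2(1) reach_sound[OF 2(2)] reach_sound[OF 2(3)]
      unfolding Cp_def by metis
  qed
qed

definition check1 :: "gen list \<times> gen \<times> gen list \<times> gen \<Rightarrow> gen \<times> gen \<times> gen \<times> gen \<Rightarrow> bool" where
  "check1 e b = (case e of (U,x1,V,x2) \<Rightarrow> case b of (p,x,q,y) \<Rightarrow> if x \<noteq> x2 then True else
     (case V of
        [v] \<Rightarrow> (if p = v then cpc U x1 [q] y else True) \<and>
               (\<forall>(R,p',S,v')\<in>set LxL. if p' = p then (if v' = v then cpc (S @ U) x1 (R @ [q]) y else True) else True)
      | [v',v] \<Rightarrow> (if p = v then cpc U x1 [v',q] y else True) \<and>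
               (\<forall>(R,p',S,v'')\<in>set LxL. if p' = p then (if v'' = v then
                  (case S of [s] \<Rightarrow> (if v' = s then cpc U x1 (R @ [q]) y else True) \<and>
                      (\<forall>(R2,a,S2,b)\<in>set LxL. if a = v' then (if b = s then cpc (R2 @ U) x1 (S2 @ R @ [q]) y else True) else True)
                   | _ \<Rightarrow> False) else True) else True)
      | _ \<Rightarrow> False))"

definition check_all :: bool where
  "check_all = ((\<forall>e\<in>set LxL. \<forall>b\<in>set baseL. check1 e b) \<and>
     (\<forall>(p,x,q,y)\<in>set baseL. ([p],x,[q],y) \<in> set LxL) \<and>
     (\<forall>(U,x,V,y)\<in>set LxL. x \<noteq> y))"

lemma check_all_true: check_all
  by code_simp

lemma wcong_len: "wcong a b \<Longrightarrow> length a = length b"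
  by (induction rule: wcong.induct) (auto dest: base_of_rels1)

lemma Cp_ext: "Cp a x b y \<Longrightarrow> Cp (t @ a) x (t @ b) y"
proof -
  assume "Cp a x b y"
  then consider "x = y" "wcong a b" | U V z where "(U,x,V,y) \<in> set LxL" "wcong a (z @ U)" "wcong b (z @ V)"
    unfolding Cp_def by blast
  then show ?thesis
  proof cases
    case 1 then show ?thesis unfolding Cp_def using wcong_app[OF wcong.refl[of t]] by blast
  next
    case 2
    have "wcong (t @ a) ((t @ z) @ U)" "wcong (t @ b) ((t @ z) @ V)"
      using wcong_app[OF wcong.refl[of t] 2(2)] wcong_app[OF wcong.refl[of t] 2(3)] by simp_all
    then show ?thesis using 2(1) unfolding Cp_def by blast
  qed
qed

lemma Cp_cong: "Cp a x b y \<Longrightarrow> wcong a' a \<Longrightarrow> wcong b' b \<Longrightarrow> Cp a' x b' y"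
  unfolding Cp_def by (meson wcong.sym wcong.trans)

lemma app_cong_l: "wcong a b \<Longrightarrow> wcong (a @ c) (b @ c)"
  using wcong_app wcong.refl by blast

lemma caseB:
  assumes IH: "\<And>w x w' y. length w < n \<Longrightarrow> wcong (w @ [x]) (w' @ [y]) \<Longrightarrow> Cp w x w' y"
    and lu: "length u < n" and C: "Cp w1 x1 (u @ [p]) x2" and B: "(p,x2,q,y) \<in> set baseL"
  shows "Cp w1 x1 (u @ [q]) y"
proof -
  have chk1: "\<And>e b. e \<in> set LxL \<Longrightarrow> b \<in> set baseL \<Longrightarrow> check1 e b"
    using check_all_true unfolding check_all_def by blast
  have chk2: "([p],x2,[q],y) \<in> set LxL"
    using check_all_true B unfolding check_all_def by fastforce
  have fin: "Cp w1 x1 (u @ [q]) y" if "cpc A x1 Bw y" "wcong w1 (t @ A)" "wcong (u @ [q]) (t @ Bw)" for A Bw t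
    using Cp_cong[OF Cp_ext[OF cpc_sound[OF that(1)]] that(2,3)] .
  from C consider (eq) "x1 = x2" "wcong w1 (u @ [p])"
    | (lx) U V z where "(U,x1,V,x2) \<in> set LxL" "wcong w1 (z @ U)" "wcong (u @ [p]) (z @ V)"
    unfolding Cp_def by blast
  then show ?thesis
  proof cases
    case eq
    then show ?thesis unfolding Cp_def using chk2 wcong.refl by blast
  next
    case lx
    have c: "check1 (U,x1,V,x2) (p,x2,q,y)" using chk1 lx(1) B by blast
    consider (one) v where "V = [v]" | (two) v' v where "V = [v',v]"
      using c unfolding check1_def by (auto split: list.splits)
    then show ?thesis
    proof cases
      case one
      have c1: "p = v \<Longrightarrow> cpc U x1 [q] y"
        and c2: "\<And>R S. (R,p,S,v) \<in> set LxL \<Longrightarrow> cpc (S @ U) x1 (R @ [q]) y"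
        using c one unfolding check1_def by (fastforce split: if_splits)+
      have "Cp u p z v" using IH[OF lu] lx(3) one by simp
      then consider "p = v" "wcong u z"
        | R S z' where "(R,p,S,v) \<in> set LxL" "wcong u (z' @ R)" "wcong z (z' @ S)"
        unfolding Cp_def by blast
      then show ?thesis
      proof cases
        case 1
        show ?thesis by (rule fin[OF c1[OF 1(1)], of z]) (use lx(2) 1(2) app_cong_l in auto)
      next
        case 2
        have a: "wcong w1 (z' @ S @ U)"
          using wcong.trans[OF lx(2) app_cong_l[OF 2(3), of U]] by simp
        have b: "wcong (u @ [q]) (z' @ R @ [q])" using app_cong_l[OF 2(2), of "[q]"] by simp
        show ?thesis by (rule fin[OF c2[OF 2(1)] a b])
      qed
    next
      case two
      have c1: "p = v \<Longrightarrow> cpc U x1 [v',q] y"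
        using c two unfolding check1_def by (fastforce split: if_splits)
      have c2: "\<exists>s. S = [s] \<and> (v' = s \<longrightarrow> cpc U x1 (R @ [q]) y) \<and>
          (\<forall>R2 S2. (R2,v',S2,s) \<in> set LxL \<longrightarrow> cpc (R2 @ U) x1 (S2 @ R @ [q]) y)"
        if "(R,p,S,v) \<in> set LxL" for R S
      proof -
        have "case S of [s] \<Rightarrow> (if v' = s then cpc U x1 (R @ [q]) y else True) \<and>
                      (\<forall>(R2,a,S2,b)\<in>set LxL. if a = v' then (if b = s then cpc (R2 @ U) x1 (S2 @ R @ [q]) y else True) else True)
                   | _ \<Rightarrow> False"
        proof -
          have "\<forall>(R,p',S,v'')\<in>set LxL. if p' = p then (if v'' = v then
                  (case S of [s] \<Rightarrow> (if v' = s then cpc U x1 (R @ [q]) y else True) \<and>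
                      (\<forall>(R2,a,S2,b)\<in>set LxL. if a = v' then (if b = s then cpc (R2 @ U) x1 (S2 @ R @ [q]) y else True) else True)
                   | _ \<Rightarrow> False) else True) else True"
            using c two unfolding check1_def by simp
          from bspec[OF this that] show ?thesis by simp
        qed
        then show ?thesis by (auto split: list.splits if_splits)
      qed
      have "Cp u p (z @ [v']) v" using IH[OF lu] lx(3) two by simp
      then consider "p = v" "wcong u (z @ [v'])"
        | R S z' where "(R,p,S,v) \<in> set LxL" "wcong u (z' @ R)" "wcong (z @ [v']) (z' @ S)"
        unfolding Cp_def by blast
      then show ?thesis
      proof cases
        case 1
        show ?thesis by (rule fin[OF c1[OF 1(1)], of z]) (use lx(2) two app_cong_l[OF 1(2), of "[q]"] in auto)
      next
        case 2
        obtain s where S: "S = [s]" and d1: "v' = s \<Longrightarrow> cpc U x1 (R @ [q]) y"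
          and d2: "\<And>R2 S2. (R2,v',S2,s) \<in> set LxL \<Longrightarrow> cpc (R2 @ U) x1 (S2 @ R @ [q]) y"
          using c2[OF 2(1)] by blast
        have "length (u @ [p]) = length (z @ V)" using wcong_len[OF lx(3)] .
        then have lz: "length z < n" using lu two by simp
        have "Cp z v' z' s" using IH[OF lz] 2(3) S by simp
        then consider "v' = s" "wcong z z'"
          | R2 S2 z'' where "(R2,v',S2,s) \<in> set LxL" "wcong z (z'' @ R2)" "wcong z' (z'' @ S2)"
          unfolding Cp_def by blast
        then show ?thesis
        proof cases
          case 1
          have a: "wcong w1 (z' @ U)" using wcong.trans[OF lx(2) app_cong_l[OF 1(2)]] .
          have b: "wcong (u @ [q]) (z' @ R @ [q])" using app_cong_l[OF 2(2), of "[q]"] by simp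
          show ?thesis by (rule fin[OF d1[OF 1(1)] a b])
        next
          case 3: 2
          have a: "wcong w1 (z'' @ R2 @ U)"
            using wcong.trans[OF lx(2) app_cong_l[OF 3(2), of U]] by simp
          have b: "wcong (u @ [q]) (z'' @ S2 @ R @ [q])"
            using wcong.trans[OF app_cong_l[OF 2(2), of "[q]", simplified] app_cong_l[OF 3(3), of "R @ [q]"]] by simp
          show ?thesis by (rule fin[OF d2[OF 3(1)] a b])
        qed
      qed
    qed
  qed
qed

definition sstep :: "gen list \<Rightarrow> gen list \<Rightarrow> bool" where
  "sstep W W' \<longleftrightarrow> (\<exists>u l r v. ((l,r) \<in> rels \<or> (r,l) \<in> rels) \<and> W = u @ l @ v \<and> W' = u @ r @ v)"

lemma sstep_sym: "sstep a b \<Longrightarrow> sstep b a"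
  unfolding sstep_def by blast

lemma sstep_wcong: "sstep a b \<Longrightarrow> wcong a b"
  unfolding sstep_def by (auto intro: wcong.step wcong.sym)

lemma rtr_wcong: "sstep\<^sup>*\<^sup>* a b \<Longrightarrow> wcong a b"
  by (induction rule: rtranclp_induct) (auto intro: wcong.refl wcong.trans sstep_wcong)

lemma rtr_sym: "sstep\<^sup>*\<^sup>* a b \<Longrightarrow> sstep\<^sup>*\<^sup>* b a"
  by (induction rule: rtranclp_induct) (auto intro: converse_rtranclp_into_rtranclp sstep_sym)

lemma wcong_sstep: "wcong a b \<Longrightarrow> sstep\<^sup>*\<^sup>* a b"
proof (induction rule: wcong.induct)
  case (step l r u v)
  then have "sstep (u @ l @ v) (u @ r @ v)" unfolding sstep_def by blast
  then show ?case by blast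
qed (auto intro: rtr_sym rtranclp_trans)

lemma mainC: "length w = n \<Longrightarrow> wcong (w @ [x]) (w' @ [y]) \<Longrightarrow> Cp w x w' y"
proof (induction n arbitrary: w x w' y rule: less_induct)
  case (less n)
  have IH: "\<And>w x w' y. length w < n \<Longrightarrow> wcong (w @ [x]) (w' @ [y]) \<Longrightarrow> Cp w x w' y"
    using less.IH by blast
  have ln: "length w = n" using less.prems(1) .
  have "sstep\<^sup>*\<^sup>* (w @ [x]) W \<Longrightarrow> \<forall>w' y. W = w' @ [y] \<longrightarrow> Cp w x w' y" for W
  proof (induction rule: rtranclp_induct)
    case base then show ?case by (auto simp: Cp_def intro: wcong.refl)
  next
    case (step W W'')
    have rW: "sstep\<^sup>*\<^sup>* (w @ [x]) W" and sW: "sstep W W''"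
      and IHW: "\<forall>w' y. W = w' @ [y] \<longrightarrow> Cp w x w' y" using step by blast+
    from sW obtain uu l r v where lr: "(l,r) \<in> rels \<or> (r,l) \<in> rels"
      and W: "W = uu @ l @ v" and W'': "W'' = uu @ r @ v" unfolding sstep_def by blast
    obtain p x2 q y2 where l: "l = [p,x2]" and r: "r = [q,y2]" and B: "(p,x2,q,y2) \<in> set baseL"
      using base_of_rels[OF lr] by blast
    show ?case
    proof (intro allI impI)
      fix w'' y'' assume W''e: "W'' = w'' @ [y'']"
      show "Cp w x w'' y''"
      proof (cases v rule: rev_cases)
        case Nil
        then have e1: "W = (uu @ [p]) @ [x2]" and e2: "w'' = uu @ [q]" "y'' = y2"
          using W W'' W''e l r by auto
        have C: "Cp w x (uu @ [p]) x2" using IHW e1 by blast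
        have "length (w @ [x]) = length W" using wcong_len[OF rtr_wcong[OF rW]] .
        then have lu: "length uu < n" using e1 ln by simp
        show ?thesis using caseB[OF IH lu C B] e2 by simp
      next
        case (snoc v' c)
        then have e1: "W = (uu @ l @ v') @ [c]" and e2: "w'' = uu @ r @ v'" "y'' = c"
          using W W'' W''e by auto
        have C: "Cp w x (uu @ l @ v') c" using IHW e1 by blast
        have "sstep (uu @ r @ v') (uu @ l @ v')" using lr unfolding sstep_def by blast
        then have "wcong w'' (uu @ l @ v')" using e2 sstep_wcong by simp
        then show ?thesis using Cp_cong[OF C wcong.refl] e2 by simp
      qed
    qed
  qed
  moreover have "sstep\<^sup>*\<^sup>* (w @ [x]) (w' @ [y])" using wcong_sstep less.prems(2) by blast
  ultimately show ?case by blast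
qed

lemma cancel1: "wcong (a @ [g]) (b @ [g]) \<Longrightarrow> wcong a b"
proof -
  assume "wcong (a @ [g]) (b @ [g])"
  then have "Cp a g b g" using mainC by blast
  moreover have "\<forall>(U,x,V,y)\<in>set LxL. x \<noteq> y" using check_all_true unfolding check_all_def by blast
  ultimately show ?thesis unfolding Cp_def by fastforce
qed

lemma cancel_list: "wcong (a @ c) (b @ c) \<Longrightarrow> wcong a b"
proof (induction c arbitrary: a b rule: rev_induct)
  case Nil then show ?case by simp
next
  case (snoc g c)
  then have "wcong ((a @ c) @ [g]) ((b @ c) @ [g])" by simp
  then have "wcong (a @ c) (b @ c)" by (rule cancel1)
  then show ?case by (rule snoc.IH)
qed

theorem mainTheorem11:
  fixes u v x :: M
  assumes "u * x = v * x"
  shows "u = v"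
  using assms by transfer (rule cancel_list)

end
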